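(* For every integer $m\ge2$, let $\rho_m=\sin^{-2}\frac{\pi}{2m}$. Then $\frac{\rho_m}{2}$ is an algebraic integer. *)

theory Defs
  imports Complex_Main "HOL-Computational_Algebra.Polynomial"
begin

end

theory Submission imports Defs begin

fun PQ :: "nat \<Rightarrow> real poly \<times> real poly" where
  "PQ 0 = (1, 0)"
| "PQ (Suc k) = (pCons 0 (fst (PQ k)) - fst (PQ k) - (smult 2 (pCons 0 (snd (PQ k))) - snd (PQ k)),
                 pCons 0 (snd (PQ k)) - snd (PQ k) + fst (PQ k))"

lemma PQ_int: "coeff (fst (PQ k)) i \<in> \<int> \<and> coeff (snd (PQ k)) i \<in> \<int>"
proof (induction k arbitrary: i)
  case 0
  then show ?case by (simp add: coeff_1)
next
  case (Suc k)
  then show ?case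
    by (cases i) (auto simp: coeff_pCons intro!: Ints_add Ints_diff Ints_mult)
qed

lemma PQ_deg: "coeff (fst (PQ k)) k = 1 \<and> (\<forall>i>k. coeff (fst (PQ k)) i = 0) \<and> (\<forall>i\<ge>k. coeff (snd (PQ k)) i = 0)"
proof (induction k)
  case 0
  then show ?case by (auto simp: coeff_1)
next
  case (Suc k)
  show ?case
  proof (intro conjI allI impI)
    show "coeff (fst (PQ (Suc k))) (Suc k) = 1" using Suc by simp
    fix i assume "i > Suc k"
    then obtain j where "i = Suc j" "j > k" by (cases i) auto
    then show "coeff (fst (PQ (Suc k))) i = 0" using Suc by simp
  next
    fix i assume "i \<ge> Suc k"
    then obtain j where "i = Suc j" "j \<ge> k" by (cases i) auto
    then show "coeff (snd (PQ (Suc k))) i = 0" using Suc by simp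
  qed
qed

lemma alg1:
  fixes x s c a b :: real
  assumes "2*x*s^2 = 1" "s^2 + c^2 = 1" "c \<noteq> 0"
  shows "x*(a*(1-2*s^2) - b*(2*s*c)) = (x-1)*a - (2*x-1)*(b*(s/c))"
proof -
  have "x*(a*(1-2*s^2) - b*(2*s*c)) * c = ((x-1)*a - (2*x-1)*(b*(s/c))) * c"
    using assms by (simp add: field_simps) algebra
  thus ?thesis using assms(3) by simp
qed

lemma alg2:
  fixes x s c a b :: real
  assumes "2*x*s^2 = 1" "s^2 + c^2 = 1" "c \<noteq> 0"
  shows "x*((b*(1-2*s^2) + a*(2*s*c))*(s/c)) = (x-1)*(b*(s/c)) + a"
proof -
  have "x*((b*(1-2*s^2) + a*(2*s*c))*(s/c)) * c = ((x-1)*(b*(s/c)) + a) * c"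
    using assms by (simp add: field_simps) algebra
  thus ?thesis using assms(3) by simp
qed

lemma PQ_eval:
  fixes t x :: real
  assumes hx: "2 * x * (sin t)^2 = 1" and hc: "cos t \<noteq> 0"
  shows "poly (fst (PQ k)) x = cos (2*k*t) * x^k \<and>
         poly (snd (PQ k)) x = sin (2*k*t) * x^k * (sin t / cos t)"
proof (induction k)
  case 0
  then show ?case by simp
next
  case (Suc k)
  have s2: "sin (2*t) = 2 * sin t * cos t" by (simp add: sin_double)
  have c2: "cos (2*t) = 1 - 2 * (sin t)^2" by (simp add: cos_double_sin)
  have a: "2 * real (Suc k) * t = 2*k*t + 2*t" by (simp add: algebra_simps)
  have e1: "x * cos (2*k*t + 2*t) = (x - 1) * cos (2*k*t) - (2*x-1) * (sin (2*k*t) * (sin t / cos t))"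
  proof -
    have "x * cos (2*k*t + 2*t) = x * (cos (2*k*t) * cos (2*t) - sin (2*k*t) * sin(2*t))"
      by (simp add: cos_add)
    also have "\<dots> = (x - 1) * cos (2*k*t) - (2*x-1) * (sin (2*k*t) * (sin t / cos t))"
      unfolding s2 c2 by (rule alg1) (use hx hc in auto)
    finally show ?thesis .
  qed
  have e2: "x * (sin (2*k*t + 2*t) * (sin t / cos t)) = (x - 1) * (sin (2*k*t) * (sin t / cos t)) + cos (2*k*t)"
  proof -
    have "x * (sin (2*k*t + 2*t) * (sin t / cos t)) = x * ((sin (2*k*t) * cos (2*t) + cos (2*k*t) * sin(2*t)) * (sin t / cos t))"
      by (simp add: sin_add)
    also have "\<dots> = (x - 1) * (sin (2*k*t) * (sin t / cos t)) + cos (2*k*t)"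
      unfolding s2 c2 by (rule alg2) (use hx hc in auto)
    finally show ?thesis .
  qed
  have p1: "poly (fst (PQ (Suc k))) x = (x-1)*poly (fst (PQ k)) x - (2*x-1)*poly (snd (PQ k)) x"
    by (simp add: algebra_simps)
  have q1: "poly (snd (PQ (Suc k))) x = (x-1)*poly (snd (PQ k)) x + poly (fst (PQ k)) x"
    by (simp add: algebra_simps)
  have "poly (fst (PQ (Suc k))) x = x^k * ((x - 1) * cos (2*k*t) - (2*x-1) * (sin (2*k*t) * (sin t / cos t)))"
    unfolding p1 using Suc.IH by (simp add: algebra_simps)
  also have "\<dots> = cos (2*real (Suc k)*t) * x^Suc k" unfolding a e1[symmetric] by (simp add: algebra_simps)
  finally have r1: "poly (fst (PQ (Suc k))) x = cos (2*real (Suc k)*t) * x^Suc k" .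
  have "poly (snd (PQ (Suc k))) x = x^k * ((x - 1) * (sin (2*k*t) * (sin t / cos t)) + cos (2*k*t))"
    unfolding q1 using Suc.IH by (simp add: algebra_simps)
  also have "\<dots> = sin (2*real (Suc k)*t) * x^Suc k * (sin t / cos t)" unfolding a e2[symmetric] by (simp add: algebra_simps)
  finally have r2: "poly (snd (PQ (Suc k))) x = sin (2*real (Suc k)*t) * x^Suc k * (sin t / cos t)" .
  show ?case using r1 r2 by simp
qed

lemma monic_from_coeffs:
  fixes p :: "real poly"
  assumes "coeff p k = 1" "\<forall>i>k. coeff p i = 0" "\<forall>i. coeff p i \<in> \<int>" "poly p x = 0"
  shows "algebraic_int x"
proof
  have "degree p = k"
    using assms(1,2) by (intro antisym degree_le le_degree) auto
  thus "lead_coeff p = 1" using assms(1) by simp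
qed (use assms in auto)

theorem lemma4p1:
  fixes m :: nat
  assumes "m \<ge> 2"
  shows "algebraic_int ((1 / (sin (pi / (2 * real m)))\<^sup>2) / 2 :: real)"
proof -
  define t where "t = pi / (2 * real m)"
  define x where "x = (1 / (sin t)\<^sup>2) / 2"
  have t0: "t > 0" using assms by (simp add: t_def)
  have t1: "t < pi/2" using assms unfolding t_def by (simp add: field_simps)
  have sp: "sin t > 0" using t0 t1 by (intro sin_gt_zero) auto
  have cp: "cos t > 0" using t0 t1 by (intro cos_gt_zero) auto
  have hx: "2 * x * (sin t)^2 = 1" using sp by (simp add: x_def)
  have ev: "\<And>k. poly (fst (PQ k)) x = cos (2*k*t) * x^k \<and>
         poly (snd (PQ k)) x = sin (2*k*t) * x^k * (sin t / cos t)"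
    using PQ_eval[OF hx] cp by auto
  have mt: "real m * t = pi/2" using assms by (simp add: t_def)
  show ?thesis
  proof (cases "even m")
    case True
    then obtain k where k: "m = 2*k" by auto
    have h: "2 * real k * t = pi/2" using mt k by simp
    have "cos (2 * real k * t) = 0" by (metis h cos_pi_half)
    hence "poly (fst (PQ k)) x = 0" using ev[of k] by simp
    thus ?thesis unfolding x_def t_def[symmetric]
      using PQ_deg[of k] PQ_int[of k]
      by (intro monic_from_coeffs[of "fst (PQ k)" k]) auto
  next
    case False
    then obtain k where k: "m = 2*k+1" using oddE by blast
    have h: "2 * real k * t + t = pi/2" using mt k by (simp add: algebra_simps)
    have "cos (2 * real k * t + t) = 0" by (metis h cos_pi_half)
    hence c0: "cos (2 * real k * t) * cos t - sin (2 * real k * t) * sin t = 0"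
      by (simp add: cos_add)
    have "poly (fst (PQ k) - snd (PQ k)) x = x^k * (cos (2 * real k * t) * cos t - sin (2 * real k * t) * sin t) / cos t"
      using ev[of k] cp by (simp add: field_simps)
    hence "poly (fst (PQ k) - snd (PQ k)) x = 0" using c0 by simp
    thus ?thesis unfolding x_def t_def[symmetric]
      using PQ_deg[of k] PQ_int[of k]
      by (intro monic_from_coeffs[of "fst (PQ k) - snd (PQ k)" k]) (auto intro: Ints_diff)
  qed
qed

end
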